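(* Let $k\ge1$. For all $0\le y_1\le y_2\le\dots\le y_k\le1$ we have $H_k(y_1,\dots,y_k)\ge0$, where \[ H_k(y_1,\dots,y_k):=\sum_{i=1}^{k}(1-y_i)\,y_{i+1}y_{i+2}\cdots y_k\;f_k(y_1)f_k(y_2)\cdots f_k(y_{i-1})\;-\;\prod_{i=1}^k f_k(y_i), \] with empty products equal to $1$.
   Context: For an integer $k\ge1$, $f_k:[0,1]\to[0,1]$ denotes the unique decreasing function satisfying $f_k(x)^k-f_k(x)^{k+1}=x^k-x^{k+1}$ for all $x\in[0,1]$; it is continuous with $f_k(0)=1$, $f_k(1)=0$. *)

theory Defs
  imports "HOL-Analysis.Analysis"
begin

definition fk :: "nat \<Rightarrow> real \<Rightarrow> real" where
  "fk k = (THE g. (\<forall>x\<in>{0..1}. \<forall>y\<in>{0..1}. x \<le> y \<longrightarrow> g y \<le> g x)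
                 \<and> (\<forall>x\<in>{0..1}. g x \<in> {0..1} \<and> g x ^ k - g x ^ (k+1) = x ^ k - x ^ (k+1))
                 \<and> (\<forall>x. x \<notin> {0..1} \<longrightarrow> g x = 0))"

definition Hk :: "nat \<Rightarrow> (nat \<Rightarrow> real) \<Rightarrow> real" where
  "Hk k y = (\<Sum>i=1..k. (1 - y i) * (\<Prod>j=i+1..k. y j) * (\<Prod>j=1..i-1. fk k (y j)))
            - (\<Prod>i=1..k. fk k (y i))"

end

theory Submission imports Defs begin

definition hh :: "nat \<Rightarrow> real \<Rightarrow> real" where "hh k t = t^k - t^(k+1)"

lemma hh_deriv: "k \<ge> 1 \<Longrightarrow> DERIV (hh k) x :> (real k * x^(k-1) - real (k+1) * x^k)"
proof -
  have "DERIV (\<lambda>t. t^k - t^(k+1)) x :> (real k * x^(k-Suc 0) - real (k+1) * x^(k+1-Suc 0))"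
    by (intro DERIV_diff DERIV_pow)
  thus ?thesis unfolding hh_def by simp
qed

lemma hh_cont: "continuous_on S (hh k)"
  unfolding hh_def by (intro continuous_intros)

lemma hh_inc:
  assumes "k \<ge> 1" "0 \<le> s" "s < t" "t \<le> real k / (k+1)"
  shows "hh k s < hh k t"
proof (rule DERIV_pos_imp_increasing_open[OF assms(3) _ hh_cont])
  fix x assume x: "s < x" "x < t"
  have "x > 0" using x assms by linarith
  have "x * (k+1) < t * (k+1)" using x by (intro mult_strict_right_mono) auto
  also have "t * (k+1) \<le> k" using assms by (simp add: field_simps)
  finally have "x * (k+1) < k" .
  hence "0 < real k - real (k+1) * x" by (simp add: algebra_simps)
  hence "0 < x^(k-1) * (real k - real (k+1) * x)" using \<open>x>0\<close> by simp
  also have "x^(k-1) * (real k - real (k+1) * x) = real k * x^(k-1) - real (k+1) * x^k"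
    using assms(1) by (cases k) (auto simp: algebra_simps)
  finally show "\<exists>y. DERIV (hh k) x :> y \<and> y > 0" using hh_deriv assms(1) by blast
qed

lemma hh_dec:
  assumes "k \<ge> 1" "real k / (k+1) \<le> s" "s < t" "t \<le> 1"
  shows "hh k t < hh k s"
proof (rule DERIV_neg_imp_decreasing_open[OF assms(3) _ hh_cont])
  fix x assume x: "s < x" "x < t"
  have "k / (k+1) > 0" using assms by simp
  hence "x > 0" using x assms by linarith
  have "x * (k+1) > s * (k+1)" using x by (intro mult_strict_right_mono) auto
  moreover have "s * (k+1) \<ge> k" using assms by (simp add: field_simps)
  ultimately have "x * (k+1) > k" by linarith
  hence "0 > real k - real (k+1) * x" by (simp add: algebra_simps)
  hence "0 > x^(k-1) * (real k - real (k+1) * x)" using \<open>x>0\<close> by (simp add: mult_pos_neg)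
  also have "x^(k-1) * (real k - real (k+1) * x) = real k * x^(k-1) - real (k+1) * x^k"
    using assms(1) by (cases k) (auto simp: algebra_simps)
  finally show "\<exists>y. DERIV (hh k) x :> y \<and> y < 0" using hh_deriv assms(1) by blast
qed

lemma hh_inc_le:
  assumes "k \<ge> 1" "0 \<le> s" "s \<le> t" "t \<le> real k / (k+1)"
  shows "hh k s \<le> hh k t"
  using hh_inc[OF assms(1,2) _ assms(4)] assms(3) by (cases "s = t") auto

lemma hh_dec_le:
  assumes "k \<ge> 1" "real k / (k+1) \<le> s" "s \<le> t" "t \<le> 1"
  shows "hh k t \<le> hh k s"
  using hh_dec[OF assms(1,2) _ assms(4)] assms(3) by (cases "s = t") auto

lemma c_bounds: "k \<ge> 1 \<Longrightarrow> 0 < real k / (k+1) \<and> real k / (k+1) < 1"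
  by (auto simp: field_simps)

lemma hh_nonneg: "0 \<le> x \<Longrightarrow> x \<le> 1 \<Longrightarrow> 0 \<le> hh k x"
  unfolding hh_def using power_decreasing[of k "k+1" x] by simp

definition PP :: "nat \<Rightarrow> (real \<Rightarrow> real) \<Rightarrow> bool" where
  "PP k g \<longleftrightarrow> (\<forall>x\<in>{0..1}. \<forall>y\<in>{0..1}. x \<le> y \<longrightarrow> g y \<le> g x)
                 \<and> (\<forall>x\<in>{0..1}. g x \<in> {0..1} \<and> g x ^ k - g x ^ (k+1) = x ^ k - x ^ (k+1))
                 \<and> (\<forall>x. x \<notin> {0..1} \<longrightarrow> g x = 0)"

lemma PP_D:
  assumes "PP k g"
  shows "\<And>x y. 0 \<le> x \<Longrightarrow> x \<le> y \<Longrightarrow> y \<le> 1 \<Longrightarrow> g y \<le> g x"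
    and "\<And>x. 0 \<le> x \<Longrightarrow> x \<le> 1 \<Longrightarrow> 0 \<le> g x \<and> g x \<le> 1 \<and> hh k (g x) = hh k x"
  using assms unfolding PP_def hh_def by auto

lemma PP_left:
  assumes P: "PP k g" and k: "k \<ge> 1" and x: "0 \<le> x" "x \<le> real k / (k+1)"
  shows "g x \<ge> real k / (k+1)"
proof (rule ccontr)
  define c where "c = real k / (k+1)"
  have c: "0 < c" "c < 1" using c_bounds[OF k] c_def by auto
  assume "\<not> ?thesis"
  hence gx: "g x < c" using c_def by simp
  have x1: "x \<le> 1" using x(2) c(2) unfolding c_def by linarith
  note gp = PP_D(2)[OF P x(1) x1]
  show False
  proof (cases "x = c")
    case True
    then have "hh k (g x) < hh k c" using hh_inc[OF k _ gx] gp c_def by auto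
    thus False using gp True by simp
  next
    case False
    hence xc: "x < c" using x c_def by simp
    have "g x = x"
    proof (rule ccontr)
      assume "g x \<noteq> x"
      hence "g x < x \<or> x < g x" by auto
      thus False
      proof
        assume "g x < x" thus False using hh_inc[OF k _ _ x(2)] gp by fastforce
      next
        assume "x < g x" thus False using hh_inc[OF k x(1) _] gx gp c_def by fastforce
      qed
    qed
    define x' where "x' = (x + c) / 2"
    have x': "x < x'" "x' < c" using xc x'_def by auto
    have "g x' \<le> g x" using PP_D(1)[OF P x(1), of x'] x' c by simp
    hence "g x' < x'" using \<open>g x = x\<close> x' by simp
    moreover note gp' = PP_D(2)[OF P, of x']
    ultimately have "hh k (g x') < hh k x'" using hh_inc[OF k _ _, of "g x'" x'] x' x c c_def by auto
    thus False using gp' x' x c by auto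
  qed
qed

lemma PP_right:
  assumes P: "PP k g" and k: "k \<ge> 1" and x: "real k / (k+1) \<le> x" "x \<le> 1"
  shows "g x \<le> real k / (k+1)"
proof (rule ccontr)
  define c where "c = real k / (k+1)"
  have c: "0 < c" "c < 1" using c_bounds[OF k] c_def by auto
  assume "\<not> ?thesis"
  hence gx: "g x > c" using c_def by simp
  have x0: "0 \<le> x" using x(1) c(1) unfolding c_def by linarith
  note gp = PP_D(2)[OF P x0 x(2)]
  show False
  proof (cases "x = c")
    case True
    then have "hh k (g x) < hh k c" using hh_dec[OF k _ gx] gp c_def by auto
    thus False using gp True by simp
  next
    case False
    hence xc: "c < x" using x c_def by simp
    have "g x = x"
    proof (rule ccontr)
      assume "g x \<noteq> x"
      hence "g x < x \<or> x < g x" by auto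
      thus False
      proof
        assume "g x < x" thus False using hh_dec[OF k _ _ x(2), of "g x"] gx gp c_def by fastforce
      next
        assume "x < g x" thus False using hh_dec[OF k x(1) _] gp by fastforce
      qed
    qed
    define x' where "x' = (x + c) / 2"
    have x': "x' < x" "c < x'" using xc x'_def by auto
    have "g x \<le> g x'" using PP_D(1)[OF P, of x' x] x' c x by simp
    hence "x' < g x'" using \<open>g x = x\<close> x' by simp
    moreover note gp' = PP_D(2)[OF P, of x']
    ultimately have "hh k (g x') < hh k x'" using hh_dec[OF k _ _, of x' "g x'"] x' x c c_def by auto
    thus False using gp' x' x c by auto
  qed
qed

lemma PP_unique:
  assumes P1: "PP k g1" and P2: "PP k g2" and k: "k \<ge> 1"
  shows "g1 = g2"
proof
  fix x
  define c where "c = real k / (k+1)"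
  show "g1 x = g2 x"
  proof (cases "x \<in> {0..1}")
    case False thus ?thesis using P1 P2 unfolding PP_def by auto
  next
    case True
    note a = PP_D(2)[OF P1, of x] and b = PP_D(2)[OF P2, of x]
    show ?thesis
    proof (cases "x \<le> c")
      case xc: True
      have l: "g1 x \<ge> c" "g2 x \<ge> c" using PP_left[OF P1 k, of x] PP_left[OF P2 k, of x] True xc c_def by auto
      show ?thesis
      proof (rule ccontr)
        assume "g1 x \<noteq> g2 x"
        hence "g1 x < g2 x \<or> g2 x < g1 x" by auto
        thus False using hh_dec[OF k, of "g1 x" "g2 x"] hh_dec[OF k, of "g2 x" "g1 x"] l a b True c_def by auto
      qed
    next
      case xc: False
      have l: "g1 x \<le> c" "g2 x \<le> c" using PP_right[OF P1 k, of x] PP_right[OF P2 k, of x] True xc c_def by auto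
      show ?thesis
      proof (rule ccontr)
        assume "g1 x \<noteq> g2 x"
        hence "g1 x < g2 x \<or> g2 x < g1 x" by auto
        thus False using hh_inc[OF k, of "g1 x" "g2 x"] hh_inc[OF k, of "g2 x" "g1 x"] l a b True c_def by auto
      qed
    qed
  qed
qed

lemma ex_right:
  assumes k: "k \<ge> 1" and x: "0 \<le> x" "x \<le> real k / (k+1)"
  shows "\<exists>!t. real k / (k+1) \<le> t \<and> t \<le> 1 \<and> hh k t = hh k x"
proof -
  define c where "c = real k / (k+1)"
  have c: "0 < c" "c < 1" using c_bounds[OF k] c_def by auto
  have "hh k 1 \<le> hh k x" using hh_nonneg[of x k] x c unfolding c_def hh_def by simp
  moreover have "hh k x \<le> hh k c" using hh_inc_le[OF k x] c_def by simp
  ultimately obtain t where t: "c \<le> t" "t \<le> 1" "hh k t = hh k x"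
    using IVT2'[of "hh k" 1 "hh k x" c] c hh_cont by auto
  show ?thesis
  proof (rule ex1I[of _ t])
    show "real k / (k+1) \<le> t \<and> t \<le> 1 \<and> hh k t = hh k x" using t c_def by simp
  next
    fix s assume s: "real k / (k+1) \<le> s \<and> s \<le> 1 \<and> hh k s = hh k x"
    show "s = t"
    proof (rule ccontr)
      assume "s \<noteq> t"
      hence "s < t \<or> t < s" by auto
      thus False using hh_dec[OF k, of s t] hh_dec[OF k, of t s] s t c_def by auto
    qed
  qed
qed

lemma ex_left:
  assumes k: "k \<ge> 1" and x: "real k / (k+1) \<le> x" "x \<le> 1"
  shows "\<exists>!t. 0 \<le> t \<and> t \<le> real k / (k+1) \<and> hh k t = hh k x"
proof -
  define c where "c = real k / (k+1)"
  have c: "0 < c" "c < 1" using c_bounds[OF k] c_def by auto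
  have x0: "0 \<le> x" using x(1) c(1) unfolding c_def by linarith
  have "hh k 0 = 0" unfolding hh_def using k by simp
  hence "hh k 0 \<le> hh k x" using hh_nonneg[OF x0 x(2), of k] by simp
  moreover have "hh k x \<le> hh k c" using hh_dec_le[OF k order.refl x(1) x(2)] c_def by simp
  ultimately obtain t where t: "0 \<le> t" "t \<le> c" "hh k t = hh k x"
    using IVT'[of "hh k" 0 "hh k x" c] c hh_cont by auto
  show ?thesis
  proof (rule ex1I[of _ t])
    show "0 \<le> t \<and> t \<le> real k / (k+1) \<and> hh k t = hh k x" using t c_def by simp
  next
    fix s assume s: "0 \<le> s \<and> s \<le> real k / (k+1) \<and> hh k s = hh k x"
    show "s = t"
    proof (rule ccontr)
      assume "s \<noteq> t"
      hence "s < t \<or> t < s" by auto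
      thus False using hh_inc[OF k, of s t] hh_inc[OF k, of t s] s t c_def by auto
    qed
  qed
qed

definition gg :: "nat \<Rightarrow> real \<Rightarrow> real" where
  "gg k x = (if x \<in> {0..1} then
     (if x \<le> real k / (k+1) then (THE t. real k / (k+1) \<le> t \<and> t \<le> 1 \<and> hh k t = hh k x)
      else (THE t. 0 \<le> t \<and> t \<le> real k / (k+1) \<and> hh k t = hh k x)) else 0)"

lemma gg_r:
  assumes k: "k \<ge> 1" and x: "0 \<le> x" "x \<le> real k / (k+1)"
  shows "real k / (k+1) \<le> gg k x \<and> gg k x \<le> 1 \<and> hh k (gg k x) = hh k x"
proof -
  have "x \<le> 1" using x c_bounds[OF k] by linarith
  hence "gg k x = (THE t. real k / (k+1) \<le> t \<and> t \<le> 1 \<and> hh k t = hh k x)"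
    using x unfolding gg_def by simp
  thus ?thesis using theI'[OF ex_right[OF k x]] by simp
qed

lemma gg_l:
  assumes k: "k \<ge> 1" and x: "real k / (k+1) < x" "x \<le> 1"
  shows "0 \<le> gg k x \<and> gg k x \<le> real k / (k+1) \<and> hh k (gg k x) = hh k x"
proof -
  have "0 \<le> x" using x c_bounds[OF k] by linarith
  hence "gg k x = (THE t. 0 \<le> t \<and> t \<le> real k / (k+1) \<and> hh k t = hh k x)"
    using x unfolding gg_def by simp
  thus ?thesis using theI'[OF ex_left[OF k _ x(2)]] x(1) by simp
qed

lemma PP_gg:
  assumes k: "k \<ge> 1"
  shows "PP k (gg k)"
proof -
  define c where "c = real k / (k+1)"
  have c: "0 < c" "c < 1" using c_bounds[OF k] c_def by auto
  have vals: "0 \<le> gg k x \<and> gg k x \<le> 1 \<and> hh k (gg k x) = hh k x" if "0 \<le> x" "x \<le> 1" for x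
    using gg_r[OF k, of x] gg_l[OF k, of x] that c c_def by (cases "x \<le> c") auto
  have mono: "gg k y \<le> gg k x" if xy: "0 \<le> x" "x \<le> y" "y \<le> 1" for x y
  proof (cases "y \<le> c")
    case True
    note a = gg_r[OF k, of x] and b = gg_r[OF k, of y]
    have "hh k x \<le> hh k y" using hh_inc_le[OF k xy(1,2)] True c_def by simp
    show ?thesis
    proof (rule ccontr)
      assume "\<not> ?thesis"
      hence "hh k (gg k y) < hh k (gg k x)" using hh_dec[OF k, of "gg k x" "gg k y"] a b True xy c_def by auto
      thus False using a b True xy c_def \<open>hh k x \<le> hh k y\<close> by auto
    qed
  next
    case yc: False
    show ?thesis
    proof (cases "x \<le> c")
      case True
      thus ?thesis using gg_r[OF k, of x] gg_l[OF k, of y] xy yc c_def by auto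
    next
      case False
      note a = gg_l[OF k, of x] and b = gg_l[OF k, of y]
      have "hh k y \<le> hh k x" using hh_dec_le[OF k _ xy(2,3), of] False c_def by simp
      show ?thesis
      proof (rule ccontr)
        assume "\<not> ?thesis"
        hence "hh k (gg k x) < hh k (gg k y)" using hh_inc[OF k, of "gg k x" "gg k y"] a b False yc xy c_def by auto
        thus False using a b False yc xy c_def \<open>hh k y \<le> hh k x\<close> by auto
      qed
    qed
  qed
  show ?thesis unfolding PP_def
    using mono vals by (auto simp: hh_def gg_def)
qed

lemma PP_fk:
  assumes k: "k \<ge> 1"
  shows "PP k (fk k)"
proof -
  have "\<exists>!g. PP k g" using PP_gg[OF k] PP_unique[OF _ _ k] by blast
  hence "PP k (THE g. PP k g)" by (rule theI')
  thus ?thesis unfolding fk_def PP_def .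
qed

definition NN :: "nat \<Rightarrow> nat \<Rightarrow> real \<Rightarrow> real \<Rightarrow> real" where
  "NN k j x g = (\<Sum>m\<in>{j..<k}. x^m * g^(k-1-m))"

lemma NN_tele:
  assumes "j < k"
  shows "x * NN k j x g - g * NN k (j+1) x g = x^k"
proof -
  have "x * NN k j x g = (\<Sum>m\<in>{j..<k}. x^(Suc m) * g^(k - Suc m))"
    unfolding NN_def sum_distrib_left by (intro sum.cong) (auto simp: algebra_simps)
  also have "\<dots> = (\<Sum>m\<in>{Suc j..<Suc k}. x^m * g^(k-m))"
    by (simp only: sum.shift_bounds_Suc_ivl)
  also have "\<dots> = (\<Sum>m\<in>{Suc j..<k}. x^m * g^(k-m)) + x^k"
    using assms by (simp add: sum.atLeastLessThan_Suc)
  finally have 1: "x * NN k j x g = (\<Sum>m\<in>{Suc j..<k}. x^m * g^(k-m)) + x^k" .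
  have 2: "g * NN k (j+1) x g = (\<Sum>m\<in>{Suc j..<k}. x^m * g^(k-m))"
    unfolding NN_def sum_distrib_left
  proof (rule sum.cong)
    show "{j+1..<k} = {Suc j..<k}" by simp
  next
    fix m assume "m \<in> {Suc j..<k}"
    hence "k - m = Suc (k-1-m)" by auto
    thus "g * (x ^ m * g ^ (k - 1 - m)) = x ^ m * g ^ (k - m)" by simp
  qed
  show ?thesis using 1 2 by simp
qed

lemma NN_key:
  assumes k: "k \<ge> 1" and h: "hh k g = hh k x" and fx: "g = x \<Longrightarrow> x = real k / (k+1)"
  shows "(1 - g) * NN k 0 x g = x^k"
proof (cases "g = x")
  case True
  hence xc: "x = real k / (k+1)" "g = x" using fx by auto
  have "NN k 0 x g = (\<Sum>m\<in>{0..<k}. x^(k-1))"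
    unfolding NN_def using xc(2) by (intro sum.cong refl) (auto simp flip: power_add)
  also have "\<dots> = real k * x^(k-1)" by simp
  finally have "(1 - g) * NN k 0 x g = (1 - x) * real k * x^(k-1)" using xc by simp
  also have "(1 - x) * real k = x" using xc by (simp add: field_simps)
  also have "x * x^(k-1) = x^k" using k by (cases k) auto
  finally show ?thesis .
next
  case False
  have s: "x^k - g^k = (x - g) * NN k 0 x g"
    unfolding power_diff_sumr2 NN_def atLeast0LessThan
    by (intro arg_cong[where f="\<lambda>s. (x-g) * s"] sum.cong) (auto simp: algebra_simps)
  have "(x - g) * ((1 - g) * NN k 0 x g - x^k) = (1 - g) * (x^k - g^k) - (x - g) * x^k"
    unfolding s by (simp add: algebra_simps)
  also have "\<dots> = (x^k - x*x^k) - (g^k - g*g^k)" by (simp add: algebra_simps)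
  also have "\<dots> = 0" using h unfolding hh_def by simp
  finally show ?thesis using False by simp
qed

lemma NN_split:
  assumes "j \<le> k"
  shows "NN k 0 x g = (\<Sum>m\<in>{0..<j}. x^m * g^(k-1-m)) + NN k j x g"
  unfolding NN_def using sum.atLeastLessThan_concat[of 0 j k "\<lambda>m. x^m * g^(k-1-m)"] assms by simp

lemma NN_mono:
  assumes "0 \<le> a" "a \<le> b" "0 \<le> gb" "gb \<le> ga" "j \<le> k"
  shows "NN k j a ga * NN k 0 b gb \<le> NN k j b gb * NN k 0 a ga"
proof -
  define K where "K = k - 1"
  have ab: "0 \<le> b" "0 \<le> ga" using assms by auto
  have trm: "a^m * ga^(k - Suc m) * (b^n * gb^(k - Suc n)) \<le> b^m * gb^(k - Suc m) * (a^n * ga^(k - Suc n))"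
    if "n < m" "m < k" for m n
  proof -
    have e: "k - Suc m = K - m" "k - Suc n = K - n" unfolding K_def by auto
    have "m \<le> K" using that K_def by auto
    define d where "d = m - n"
    have m: "m = n + d" and kn: "K - n = (K - m) + d" using that d_def \<open>m \<le> K\<close> by auto
    define C where "C = a^n * b^n * ga^(K-m) * gb^(K-m)"
    have C: "0 \<le> C" unfolding C_def using assms ab by simp
    have "a * gb \<le> b * ga" using assms ab by (intro mult_mono) auto
    hence "(a * gb)^d \<le> (b * ga)^d" using assms by (intro power_mono) auto
    hence "C * (a * gb)^d \<le> C * (b * ga)^d" using C by (rule mult_left_mono)
    moreover have "a^m * ga^(K-m) * (b^n * gb^(K-n)) = C * (a * gb)^d"
      unfolding C_def m kn by (simp add: power_add power_mult_distrib)
    moreover have "b^m * gb^(K-m) * (a^n * ga^(K-n)) = C * (b * ga)^d"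
      unfolding C_def m kn by (simp add: power_add power_mult_distrib)
    ultimately show ?thesis unfolding e by simp
  qed
  have "NN k j a ga * (\<Sum>n\<in>{0..<j}. b^n * gb^(k-1-n)) \<le> NN k j b gb * (\<Sum>n\<in>{0..<j}. a^n * ga^(k-1-n))"
    unfolding NN_def sum_product
    by (intro sum_mono) (auto intro!: trm)
  thus ?thesis using NN_split[OF assms(5)] by (simp add: algebra_simps)
qed

lemma NN_nonneg: "0 \<le> x \<Longrightarrow> 0 \<le> g \<Longrightarrow> 0 \<le> NN k j x g"
  unfolding NN_def by (intro sum_nonneg) auto

lemma NN_empty: "NN k k x g = 0"
  unfolding NN_def by simp

lemma NN_pos:
  assumes "k \<ge> 1" "0 \<le> x" "0 \<le> g" "0 < x \<or> 0 < g"
  shows "0 < NN k 0 x g"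
proof -
  have fin: "finite {0..<k}" by simp
  have nn: "\<forall>m\<in>{0..<k}. 0 \<le> x^m * g^(k-1-m)" using assms by auto
  have a: "x^(k-1) * g^(k-1-(k-1)) \<le> NN k 0 x g"
    unfolding NN_def using nn assms(1) by (intro member_le_sum[of "k-1" "{0..<k}" "\<lambda>m. x^m * g^(k-1-m)"]) auto
  have b: "x^0 * g^(k-1-0) \<le> NN k 0 x g"
    unfolding NN_def using nn assms(1) by (intro member_le_sum[of 0 "{0..<k}" "\<lambda>m. x^m * g^(k-1-m)"]) auto
  show ?thesis using assms(4)
  proof
    assume "0 < x" hence "0 < x^(k-1)" by simp
    thus ?thesis using a by simp
  next
    assume "0 < g" hence "0 < g^(k-1)" by simp
    thus ?thesis using b by simp
  qed
qed

lemma step: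
  assumes j: "j < k"
    and hyp: "0 \<le> G * NN k 0 a ga + P * NN k j a ga"
    and Ma: "0 < NN k 0 a ga" and Mb: "0 < NN k 0 b gb" and P: "0 \<le> P"
    and ab: "0 \<le> a" "a \<le> b" "0 \<le> gb" "gb \<le> ga"
    and key: "(1 - gb) * NN k 0 b gb = b^k"
  shows "0 \<le> (b*G + (1-gb)*P) * NN k 0 b gb + (P*gb) * NN k (j+1) b gb"
proof -
  define A where "A = NN k 0 a ga"
  define B where "B = NN k 0 b gb"
  define NA where "NA = NN k j a ga"
  define NB where "NB = NN k j b gb"
  have tele: "b * NB - gb * NN k (j+1) b gb = b^k" using NN_tele[OF j] NB_def by simp
  have e: "(b*G + (1-gb)*P) * B + (P*gb) * NN k (j+1) b gb = b * (G * B + P * NB)"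
  proof -
    have "(b*G + (1-gb)*P) * B + (P*gb) * NN k (j+1) b gb = b*G*B + P*((1-gb)*B) + P*(gb * NN k (j+1) b gb)"
      by (simp add: algebra_simps)
    also have "\<dots> = b*G*B + P*((1-gb)*B + gb * NN k (j+1) b gb)" by (simp add: algebra_simps)
    also have "(1-gb)*B + gb * NN k (j+1) b gb = b * NB" using key tele B_def by simp
    finally have "(b*G + (1-gb)*P) * B + (P*gb) * NN k (j+1) b gb = b*G*B + P*(b * NB)" by simp
    thus ?thesis by (simp add: algebra_simps)
  qed
  have mono: "NA * B \<le> NB * A" unfolding NA_def B_def NB_def A_def
    using NN_mono[OF ab(1,2,3,4)] j by simp
  have h1: "0 \<le> (G * A + P * NA) * B" using hyp Mb A_def NA_def B_def by simp
  have h2: "P * (NA * B) \<le> P * (NB * A)" using mono P by (rule mult_left_mono)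
  have "A * (G * B + P * NB) = (G * A + P * NA) * B + (P * (NB * A) - P * (NA * B))"
    by (simp add: algebra_simps)
  also have "\<dots> \<ge> 0" using h1 h2 by simp
  finally have "0 \<le> A * (G * B + P * NB)" .
  hence "0 \<le> G * B + P * NB" using Ma A_def by (simp add: zero_le_mult_iff)
  hence "0 \<le> b * (G * B + P * NB)" using ab by simp
  thus ?thesis using e B_def by simp
qed

definition Gr :: "(nat \<Rightarrow> real) \<Rightarrow> (nat \<Rightarrow> real) \<Rightarrow> nat \<Rightarrow> real" where
  "Gr y g n = (\<Sum>i=1..n. (1 - y i) * (\<Prod>j=i+1..n. y j) * (\<Prod>j=1..i-1. g j)) - (\<Prod>i=1..n. g i)"

lemma Gr_0: "Gr y g 0 = -1" unfolding Gr_def by simp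

lemma Gr_Suc: "Gr y g (Suc n) = y (Suc n) * Gr y g n + (1 - g (Suc n)) * (\<Prod>j=1..n. g j)"
proof -
  have s: "(\<Sum>i=1..Suc n. (1 - y i) * (\<Prod>j=i+1..Suc n. y j) * (\<Prod>j=1..i-1. g j))
      = (\<Sum>i=1..n. (1 - y i) * (\<Prod>j=i+1..Suc n. y j) * (\<Prod>j=1..i-1. g j))
        + (1 - y (Suc n)) * (\<Prod>j=1..n. g j)"
    by (simp add: sum.cl_ivl_Suc)
  have t: "(\<Sum>i=1..n. (1 - y i) * (\<Prod>j=i+1..Suc n. y j) * (\<Prod>j=1..i-1. g j))
      = y (Suc n) * (\<Sum>i=1..n. (1 - y i) * (\<Prod>j=i+1..n. y j) * (\<Prod>j=1..i-1. g j))"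
    unfolding sum_distrib_left
  proof (intro sum.cong refl)
    fix i assume "i \<in> {1..n}"
    hence "(\<Prod>j=i+1..Suc n. y j) = (\<Prod>j=i+1..n. y j) * y (Suc n)"
      by (simp add: prod.cl_ivl_Suc)
    thus "(1 - y i) * (\<Prod>j=i+1..Suc n. y j) * (\<Prod>j=1..i-1. g j)
        = y (Suc n) * ((1 - y i) * (\<Prod>j=i+1..n. y j) * (\<Prod>j=1..i-1. g j))" by simp
  qed
  have p: "(\<Prod>i=1..Suc n. g i) = (\<Prod>i=1..n. g i) * g (Suc n)" by (simp add: prod.cl_ivl_Suc)
  show ?thesis unfolding Gr_def s t p by (simp add: algebra_simps)
qed

lemma fk_props:
  assumes k: "k \<ge> 1" and x: "0 \<le> x" "x \<le> 1"
  shows "0 \<le> fk k x \<and> fk k x \<le> 1 \<and> hh k (fk k x) = hh k x"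
    and "(1 - fk k x) * NN k 0 x (fk k x) = x^k"
    and "0 < NN k 0 x (fk k x)"
proof -
  note P = PP_fk[OF k]
  show g: "0 \<le> fk k x \<and> fk k x \<le> 1 \<and> hh k (fk k x) = hh k x" using PP_D(2)[OF P x] .
  have c: "0 < real k / (k+1)" using c_bounds[OF k] by simp
  have fx: "x = real k / (k+1)" if "fk k x = x"
  proof (cases "x \<le> real k / (k+1)")
    case True thus ?thesis using PP_left[OF P k x(1) True] that by simp
  next
    case False thus ?thesis using PP_right[OF P k _ x(2)] that by simp
  qed
  show "(1 - fk k x) * NN k 0 x (fk k x) = x^k" using NN_key[OF k _ fx] g by simp
  have "0 < x \<or> 0 < fk k x"
  proof (cases "x = 0")
    case True
    hence "fk k x \<ge> real k / (k+1)" using PP_left[OF P k, of x] c by simp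
    thus ?thesis using c by simp
  qed (use x in auto)
  thus "0 < NN k 0 x (fk k x)" using NN_pos[OF k x(1)] g by simp
qed

theorem mainTheorem5':
  fixes k :: nat and y :: "nat \<Rightarrow> real"
  assumes k: "k \<ge> 1"
    and y1: "0 \<le> y 1"
    and ymono: "\<And>i. 1 \<le> i \<Longrightarrow> i < k \<Longrightarrow> y i \<le> y (i+1)"
    and yk: "y k \<le> 1"
  shows "Hk k y \<ge> 0"
proof -
  have ym: "y i \<le> y j" if "1 \<le> i" "i \<le> j" "j \<le> k" for i j
    using that
  proof (induction j)
    case 0 thus ?case by simp
  next
    case (Suc j)
    show ?case
    proof (cases "i = Suc j")
      case False
      hence "y i \<le> y j" using Suc by simp
      also have "y j \<le> y (Suc j)" using ymono[of j] Suc False by simp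
      finally show ?thesis .
    qed simp
  qed
  have yb: "0 \<le> y i \<and> y i \<le> 1" if "1 \<le> i" "i \<le> k" for i
    using ym[of 1 i] ym[of i k] that y1 yk by auto
  define g where "g j = fk k (y j)" for j
  define z where "z j = y (max 1 j)" for j
  have zb: "0 \<le> z j \<and> z j \<le> 1" if "j \<le> k" for j
    unfolding z_def using yb[of "max 1 j"] that k by auto
  have zg: "fk k (z j) = g (max 1 j)" for j unfolding z_def g_def by simp
  have claim: "0 \<le> Gr y g j * NN k 0 (z j) (fk k (z j)) + (\<Prod>i=1..j. g i) * NN k j (z j) (fk k (z j))"
    if "j \<le> k" for j
    using that
  proof (induction j)
    case 0 thus ?case by (simp add: Gr_0)
  next
    case (Suc j)
    have jk: "j < k" using Suc by simp
    note za = zb[of j] and zbb = zb[of "Suc j"]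
    have zs: "z (Suc j) = y (Suc j)" unfolding z_def by simp
    have ab: "z j \<le> z (Suc j)"
    proof (cases "j = 0")
      case True thus ?thesis unfolding z_def by simp
    next
      case False thus ?thesis unfolding z_def using ymono[of j] jk by simp
    qed
    have gab: "fk k (z (Suc j)) \<le> fk k (z j)"
      using PP_D(1)[OF PP_fk[OF k], of "z j" "z (Suc j)"] ab za zbb Suc.prems jk by simp
    have P: "0 \<le> (\<Prod>i=1..j. g i)"
      unfolding g_def
    proof (intro prod_nonneg)
      fix i assume "i \<in> {1..j}"
      hence "0 \<le> y i \<and> y i \<le> 1" using yb[of i] jk by simp
      thus "0 \<le> fk k (y i)" using fk_props(1)[OF k, of "y i"] by simp
    qed
    note st = step[OF jk Suc.IH[OF less_imp_le[OF jk]] fk_props(3)[OF k] fk_props(3)[OF k] P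
       _ ab _ gab fk_props(2)[OF k]]
    have "g (Suc j) = fk k (z (Suc j))" using zs g_def by simp
    then show ?case
      using st za zbb jk fk_props(1)[OF k, of "z (Suc j)"] Suc.prems
      by (simp add: Gr_Suc prod.cl_ivl_Suc zs)
  qed
  have "0 \<le> Gr y g k * NN k 0 (z k) (fk k (z k))"
    using claim[of k] NN_empty by simp
  moreover have "0 < NN k 0 (z k) (fk k (z k))" using fk_props(3)[OF k] zb[of k] by simp
  ultimately have "0 \<le> Gr y g k" by (simp add: zero_le_mult_iff)
  thus ?thesis unfolding Hk_def Gr_def g_def by simp
qed

theorem mainTheorem5:
  fixes k :: nat and y :: "nat \<Rightarrow> real"
  assumes "k \<ge> 1"
    and "0 \<le> y 1"
    and "\<And>i. 1 \<le> i \<Longrightarrow> i < k \<Longrightarrow> y i \<le> y (i+1)"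
    and "y k \<le> 1"
  shows "Hk k y \<ge> 0"
    using mainTheorem5'[OF assms] .

end
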